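(* Let $X,a,b$ be variables, let $C_k=\frac1{k+1}\binom{2k}{k}$ denote the Catalan numbers, and let $U_n(x)$ be the Chebyshev polynomials of the second kind, defined by $\sum_{n\ge0}U_n(x)z^n=\frac1{1-2xz+z^2}$, with $U_{-1}(x)=0$. Then for all positive integers $n$, $$\det_{0\le i,j\le n-1}\left(X(-2a)^{i+j+1}+\sum_{k=0}^{\lfloor(i+j)/2\rfloor}(-2a)^{i+j-2k}C_k-b\Big(X(-2a)^{i+j}+\sum_{k=0}^{\lfloor(i+j-1)/2\rfloor}(-2a)^{i+j-2k-1}C_k\Big)\right)$$ $$=U_{n-1}(b/2)\big(XU_n(-a)+U_{n-1}(-a)\big)-U_n(b/2)\big(XU_{n-1}(-a)+U_{n-2}(-a)\big).$$
   Context: An empty sum equals $0$. *)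

theory Defs
  imports "Jordan_Normal_Form.Determinant" "HOL-Computational_Algebra.Formal_Power_Series"
begin

definition catalan :: "nat \<Rightarrow> 'a :: field_char_0" where
  "catalan k = of_nat ((2*k) choose k) / of_nat (k+1)"

definition chebU :: "int \<Rightarrow> 'a :: field_char_0 \<Rightarrow> 'a" where
  "chebU n x = (if n < 0 then 0 else
     fps_nth (inverse (1 - fps_const (2*x) * fps_X + fps_X^2)) (nat n))"

end

theory Submission
  imports Defs
begin


lemma chebU_rec_nat:
  fixes x :: "'a::field_char_0"
  shows "chebU (int n + 2) x = 2*x*chebU (int n + 1) x - chebU (int n) x"
proof -
  define Q :: "'a fps" where "Q = 1 - fps_const (2*x) * fps_X + fps_X^2"
  define F where "F = inverse Q"
  have q0: "fps_nth Q 0 = 1" unfolding Q_def by (simp add: power2_eq_square)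
  have "F * Q = 1" unfolding F_def using q0 by (intro inverse_mult_eq_1) simp
  hence "fps_nth (F * Q) (n+2) = 0" by simp
  moreover have "F * Q = F - fps_const (2*x) * (fps_X * F) + fps_X^2 * F"
    unfolding Q_def by (simp add: algebra_simps)
  ultimately have "fps_nth F (n+2) - 2*x * fps_nth F (n+1) + fps_nth F n = 0"
    by (simp add: fps_X_power_mult_nth)
  moreover have "nat (int n + 2) = n+2" "nat (int n + 1) = n+1" by auto
  ultimately show ?thesis unfolding chebU_def F_def Q_def by (simp add: algebra_simps)
qed

lemma chebU_0[simp]: "chebU 0 x = 1"
  unfolding chebU_def by (simp add: power2_eq_square)

lemma chebU_neg: "n < 0 \<Longrightarrow> chebU n x = 0"
  unfolding chebU_def by simp

lemma chebU_rec:
  fixes x :: "'a::field_char_0"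
  assumes "n \<ge> 0"
  shows "chebU (n + 1) x = 2*x*chebU n x - chebU (n - 1) x"
proof (cases "n = 0")
  case True
  have "chebU (int 0 + 2) x = 2*x*chebU (int 0 + 1) x - chebU (int 0) x" by (rule chebU_rec_nat)
  hence "chebU 1 x = 2 * x" 
    unfolding chebU_def by (simp add: power2_eq_square fps_inverse_def)
  then show ?thesis using True by (simp add: chebU_neg)
next
  case False
  then obtain m where m: "n = int m + 1" using assms by (intro that[of "nat (n - 1)"]) auto
  show ?thesis using chebU_rec_nat[of m x] unfolding m by (simp add: add.assoc)
qed




fun B :: "nat \<Rightarrow> nat \<Rightarrow> int" where
  "B 0 l = (if l = 0 then 1 else 0)"
| "B (Suc i) l = (if l = 0 then 0 else B i (l-1)) + B i (l+1)"

definition bal :: "nat \<Rightarrow> nat \<Rightarrow> int" where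
  "bal l r = int ((l+2*r) choose r) - (if r = 0 then 0 else int ((l+2*r) choose (r-1)))"

lemma bal_step: "bal (Suc l) (Suc r) = bal l (Suc r) + bal (Suc (Suc l)) r"
proof (cases r)
  case 0 then show ?thesis by (simp add: bal_def)
next
  case (Suc s)
  have e1: "Suc l + 2 * Suc (Suc s) = Suc (l + 2*Suc (Suc s))" by simp
  have e2: "Suc (Suc l) + 2 * Suc s = l + 2*Suc (Suc s)" by simp
  show ?thesis unfolding bal_def Suc e1 e2
    by (simp only: binomial_Suc_Suc diff_Suc_Suc diff_zero of_nat_add) simp
qed

lemma bal_zero: "bal 0 (Suc r) = bal 1 r"
proof (cases r)
  case 0 then show ?thesis by (simp add: bal_def)
next
  case (Suc s)
  have sym: "(Suc (2*r)) choose (Suc r) = (Suc (2*r)) choose r"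
    using binomial_symmetric[of r "Suc (2*r)"] by simp
  have e1: "0 + 2 * Suc r = Suc (Suc (2*r))" by simp
  have e2: "1 + 2 * r = Suc (2*r)" by simp
  show ?thesis unfolding bal_def e1 e2 using sym Suc
    by (simp only: binomial_Suc_Suc diff_Suc_Suc diff_zero of_nat_add) simp
qed

lemma B_closed: "B i l = (if l \<le> i \<and> even (i - l) then bal l ((i - l) div 2) else 0)"
proof (induction i arbitrary: l)
  case 0 then show ?case by (simp add: bal_def)
next
  case (Suc i)
  show ?case
  proof (cases l)
    case 0
    have "B (Suc i) l = B i 1" using 0 by simp
    also have "\<dots> = (if even (Suc i) then bal 0 (Suc i div 2) else 0)"
    proof (cases "even i")
      case True then show ?thesis using Suc.IH[of 1] by (cases i) auto
    next
      case False
      then obtain r where r: "i = Suc (2*r)" by (metis oddE Suc_eq_plus1)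
      show ?thesis using Suc.IH[of 1] r bal_zero[of r] by simp
    qed
    finally show ?thesis using 0 by simp
  next
    case (Suc l')
    have "B (Suc i) l = B i l' + B i (Suc (Suc l'))" using Suc by simp
    also have "\<dots> = (if l \<le> Suc i \<and> even (Suc i - l) then bal l ((Suc i - l) div 2) else 0)"
    proof (cases "l' \<le> i \<and> even (i - l')")
      case True
      then obtain r where r: "i = l' + 2*r" by (metis evenE le_add_diff_inverse)
      show ?thesis
      proof (cases r)
        case 0 then show ?thesis using r Suc Suc.IH[of l'] Suc.IH[of "Suc (Suc l')"] by (simp add: bal_def)
      next
        case (Suc s)
        have "i - l' = 2 * Suc s" "i - Suc (Suc l') = 2 * s" "Suc i - Suc l' = 2 * Suc s" using r Suc by auto
        then show ?thesis using r Suc \<open>l = Suc l'\<close> Suc.IH[of l'] Suc.IH[of "Suc (Suc l')"] bal_step[of l' s]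
          by simp
      qed
    next
      case False
      then show ?thesis using Suc Suc.IH[of l'] Suc.IH[of "Suc (Suc l')"] by auto
    qed
    finally show ?thesis .
  qed
qed

lemma B_above: "i < l \<Longrightarrow> B i l = 0"
  by (simp add: B_closed)

lemma B_diag: "B i i = 1"
  by (simp add: B_closed bal_def)

lemma B_odd: "B (Suc (2*k)) 0 = 0"
  by (simp add: B_closed)

lemma B_even: "(of_int (B (2*k) 0) :: 'a::field_char_0) = catalan k"
proof (cases k)
  case 0 then show ?thesis by (simp add: B_closed bal_def catalan_def)
next
  case (Suc j)
  have key: "Suc j * ((2*Suc j) choose Suc j) = Suc (Suc j) * ((2*Suc j) choose j)"
  proof -
    have e: "Suc (j + Suc j) = 2 * Suc j" by simp
    show ?thesis using Suc_times_binomial_add[of j "Suc j"] unfolding e .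
  qed
  have "B (2*k) 0 = int ((2*k) choose k) - int ((2*k) choose j)"
    using Suc by (simp add: B_closed bal_def)
  hence "(of_int (B (2*k) 0) :: 'a) = of_nat ((2*k) choose k) - of_nat ((2*k) choose j)" by simp
  also have "\<dots> = of_nat ((2*k) choose k) / of_nat (k+1)"
  proof -
    have key2: "k * ((2*k) choose k) = (k+1) * ((2*k) choose j)"
      using key by (simp only: Suc[symmetric]) simp
    have "(of_nat (k * ((2*k) choose k)) :: 'a) = of_nat ((k+1) * ((2*k) choose j))"
      using key2 by (simp only:)
    hence "(of_nat k * of_nat ((2*k) choose k) :: 'a) = of_nat (k+1) * of_nat ((2*k) choose j)"
      by (simp only: of_nat_mult)
    moreover have "(of_nat (k+1) :: 'a) \<noteq> 0" by (simp del: of_nat_Suc)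
    ultimately show ?thesis by (simp add: field_simps)
  qed
  finally show ?thesis by (simp add: catalan_def)
qed




declare B.simps(2)[simp del]

lemma shift_sum:
  fixes g :: "nat \<Rightarrow> 'a::comm_ring_1"
  shows "(\<Sum>l\<le>Suc j. of_int (B (Suc j) l) * g l)
       = (\<Sum>l\<le>j. of_int (B j l) * (g (Suc l) + (if l = 0 then 0 else g (l-1))))"
proof -
  have "(\<Sum>l\<le>Suc j. of_int (B (Suc j) l) * g l)
     = (\<Sum>l\<le>Suc j. (if l = 0 then 0 else of_int (B j (l-1))) * g l) + (\<Sum>l\<le>Suc j. of_int (B j (Suc l)) * g l)"
    by (auto simp: sum.distrib[symmetric] algebra_simps B.simps(2) intro!: sum.cong)
  also have "(\<Sum>l\<le>Suc j. (if l = 0 then 0 else of_int (B j (l-1))) * g l) = (\<Sum>l\<le>j. of_int (B j l) * g (Suc l))"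
    by (subst sum.atMost_Suc_shift) simp
  also have "(\<Sum>l\<le>Suc j. of_int (B j (Suc l)) * g l) = (\<Sum>l\<le>j. of_int (B j (Suc l)) * g l)"
    by (simp add: B_above)
  also have "\<dots> = (\<Sum>l\<le>Suc j. of_int (B j l) * (if l = 0 then 0 else g (l-1)))"
    by (subst sum.atMost_Suc_shift) simp
  also have "\<dots> = (\<Sum>l\<le>j. of_int (B j l) * (if l = 0 then 0 else g (l-1)))"
    by (simp add: B_above)
  finally show ?thesis by (simp add: sum.distrib[symmetric] algebra_simps)
qed

definition sq :: "nat \<Rightarrow> 'a::field_char_0" where "sq m = of_int (B m 0)"

definition nu :: "'a::field_char_0 \<Rightarrow> nat \<Rightarrow> 'a" where
  "nu c m = (\<Sum>k=0..m div 2. c^(m-2*k) * catalan k)"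

lemma nu_0: "nu c 0 = 1"
  by (simp add: nu_def catalan_def)

lemma nu_Suc: "nu c (Suc m) = c * nu c m + sq (Suc m)"
proof (cases "even m")
  case True
  then obtain q where q: "m = 2*q" by blast
  have d: "Suc m div 2 = q" "m div 2 = q" using q by auto
  have "nu c (Suc m) = (\<Sum>k=0..q. c * (c^(m-2*k) * catalan k))"
    unfolding nu_def d by (rule sum.cong) (auto simp: q Suc_diff_le)
  also have "\<dots> = c * nu c m" unfolding nu_def d by (simp add: sum_distrib_left)
  finally show ?thesis using q by (simp add: sq_def B_odd)
next
  case False
  then obtain q where q: "m = Suc (2*q)" by (metis oddE Suc_eq_plus1)
  have d: "Suc m div 2 = Suc q" "m div 2 = q" using q by auto
  have "nu c (Suc m) = (\<Sum>k=0..q. c^(Suc m-2*k) * catalan k) + catalan (Suc q)"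
    unfolding nu_def d by (simp add: q)
  also have "(\<Sum>k=0..q. c^(Suc m-2*k) * catalan k) = (\<Sum>k=0..q. c * (c^(m-2*k) * catalan k))"
    by (rule sum.cong) (auto simp: q Suc_diff_le)
  also have "\<dots> = c * nu c m" unfolding nu_def d by (simp add: sum_distrib_left)
  finally show ?thesis using q B_even[of "Suc q", where 'a='a] by (simp add: sq_def)
qed

definition RR :: "'a::field_char_0 \<Rightarrow> nat \<Rightarrow> 'a" where
  "RR c m = (if m = 0 then 0 else nu c (m-1))"

lemma RR_Suc: "RR c (Suc m) = c * RR c m + sq m"
  by (cases m) (simp_all add: RR_def nu_0 nu_Suc sq_def)

lemma nu_RR: "nu c m = sq m + c * RR c m"
  by (cases m) (simp_all add: RR_def nu_0 nu_Suc sq_def)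

lemma second_sum:
  fixes c :: "'a::field_char_0"
  shows "(\<Sum>k\<in>{0..(int m - 1) div 2}. c^(nat (int m - 2*k - 1)) * catalan (nat k)) = RR c m"
proof (cases m)
  case 0 then show ?thesis by (simp add: RR_def)
next
  case (Suc m')
  have e: "(int m - 1) div 2 = int (m' div 2)" using Suc by simp
  have "(\<Sum>k\<in>{0..(int m - 1) div 2}. c^(nat (int m - 2*k - 1)) * catalan (nat k))
      = (\<Sum>k\<in>int ` {0..m' div 2}. c^(nat (int m - 2*k - 1)) * catalan (nat k))"
    unfolding e image_int_atLeastAtMost by simp
  also have "\<dots> = (\<Sum>k=0..m' div 2. c^(m' - 2*k) * catalan k)"
    by (subst sum.reindex) (auto simp: Suc intro!: sum.cong arg_cong[where f="\<lambda>x. c^x"])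
  finally show ?thesis by (simp add: RR_def nu_def Suc)
qed




lemma sum_delta0: "(\<Sum>l\<le>(j::nat). f l * (if l = 0 then 1 else (0::'a::comm_ring_1))) = f 0"
  by (induction j) auto

context fixes X a b :: "'a::field_char_0" begin

definition "cc = -2*a"
definition pp :: "nat \<Rightarrow> 'a" where "pp k = chebU (int k) (-a)"
definition ww :: "nat \<Rightarrow> 'a" where "ww k = chebU (int k - 1) (-a) + X * chebU (int k) (-a)"
definition NN :: "nat \<Rightarrow> nat \<Rightarrow> 'a" where
  "NN k l = (if k = l then 1 else 0) + (cc - b) * pp (min k l) * ww (max k l)"
definition hh :: "nat \<Rightarrow> 'a" where
  "hh m = X*cc^(m+1) + nu cc m - b*(X*cc^m + RR cc m)"

lemma cheb_rec_a: "n \<ge> 0 \<Longrightarrow> chebU (n+1) (-a) = cc * chebU n (-a) - chebU (n-1) (-a)"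
  using chebU_rec[of n "-a"] by (simp add: cc_def)

lemma cheb_rec_a': "n \<ge> 0 \<Longrightarrow> chebU (1 + n) (-a) = cc * chebU n (-a) - chebU (n-1) (-a)"
  using cheb_rec_a[of n] by (simp add: add.commute)

lemma pp_rec: "pp (Suc l) = cc * pp l - (if l = 0 then 0 else pp (l-1))"
  using cheb_rec_a'[of "int l"] by (auto simp: pp_def chebU_neg of_nat_diff)

lemma pp_0[simp]: "pp 0 = 1" by (simp add: pp_def)

lemma ww_0: "ww 0 = X" by (simp add: ww_def chebU_neg)

lemma ww_1: "ww 1 = 1 + X * cc"
  using cheb_rec_a[of 0] by (simp add: ww_def chebU_neg)

lemma ww_rec: "k \<ge> 1 \<Longrightarrow> ww (Suc k) = cc * ww k - ww (k-1)"
proof -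
  assume k: "k \<ge> 1"
  have e1: "chebU (int k) (-a) = cc * chebU (int k - 1) (-a) - chebU (int k - 2) (-a)"
    using cheb_rec_a[of "int k - 1"] k by simp
  have e2: "chebU (int k + 1) (-a) = cc * chebU (int k) (-a) - chebU (int k - 1) (-a)"
    using cheb_rec_a[of "int k"] by simp
  have e3: "int (Suc k) - 1 = int k" "int (Suc k) = int k + 1" "int (k - 1) - 1 = int k - 2" "int (k-1) = int k - 1"
    using k by auto
  have e1': "chebU (int k) (- a) + chebU (int k - 2) (- a) = cc * chebU (int k - 1) (- a)"
    using e1 by simp
  show ?thesis unfolding ww_def e3 e2 by (simp add: algebra_simps e1')
qed

lemma wronski: "ww (Suc i) * pp i - pp (Suc i) * ww i = 1"
proof (induction i)
  case 0 then show ?case using ww_1 ww_0 pp_rec[of 0] by (simp add: algebra_simps)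
next
  case (Suc i)
  have e1: "ww (Suc (Suc i)) = cc * ww (Suc i) - ww i" using ww_rec[of "Suc i"] by simp
  have e2: "pp (Suc (Suc i)) = cc * pp (Suc i) - pp i" using pp_rec[of "Suc i"] by simp
  have "ww (Suc (Suc i)) * pp (Suc i) - pp (Suc (Suc i)) * ww (Suc i) = ww (Suc i) * pp i - pp (Suc i) * ww i"
    unfolding e1 e2 by (simp add: algebra_simps)
  then show ?case using Suc.IH by simp
qed

lemma sum_p: "(\<Sum>l\<le>j. of_int (B j l) * pp l) = cc^j"
proof (induction j)
  case 0 then show ?case by simp
next
  case (Suc j)
  have "(\<Sum>l\<le>Suc j. of_int (B (Suc j) l) * pp l) = (\<Sum>l\<le>j. of_int (B j l) * (cc * pp l))"
    unfolding shift_sum by (rule sum.cong) (auto simp: pp_rec)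
  also have "\<dots> = cc * (\<Sum>l\<le>j. of_int (B j l) * pp l)" by (simp add: sum_distrib_left mult.left_commute)
  also have "\<dots> = cc * cc^j" using Suc.IH by simp
  finally show ?case by simp
qed

lemma sum_v1: "(\<Sum>l\<le>j. of_int (B j l) * chebU (int l - 1) (-a)) = RR cc j"
proof (induction j)
  case 0 then show ?case by (simp add: chebU_neg RR_def)
next
  case (Suc j)
  have "(\<Sum>l\<le>Suc j. of_int (B (Suc j) l) * chebU (int l - 1) (-a))
     = (\<Sum>l\<le>j. of_int (B j l) * (cc * chebU (int l - 1) (-a) + (if l = 0 then 1 else 0)))"
    unfolding shift_sum
  proof (rule sum.cong)
    fix l assume "l \<in> {..j}"
    show "of_int (B j l) * (chebU (int (Suc l) - 1) (-a) + (if l = 0 then 0 else chebU (int (l - 1) - 1) (-a)))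
      = of_int (B j l) * (cc * chebU (int l - 1) (-a) + (if l = 0 then 1 else 0))"
    proof (cases l)
      case 0 then show ?thesis by (simp add: chebU_neg)
    next
      case (Suc l')
      then show ?thesis using cheb_rec_a[of "int l'"] by (simp add: algebra_simps)
    qed
  qed simp
  also have "\<dots> = cc * RR cc j + sq j"
    using Suc.IH by (simp add: sum_distrib_left[symmetric] distrib_left sum.distrib sq_def sum_delta0 mult.left_commute)
  finally show ?case by (simp add: RR_Suc)
qed

lemma sum_w: "(\<Sum>l\<le>j. of_int (B j l) * ww l) = RR cc j + X * cc^j"
  using sum_v1[of j] sum_p[of j]
  by (simp add: ww_def pp_def distrib_left sum.distrib sum_distrib_left[symmetric] mult.left_commute)

lemma base: "(\<Sum>l\<le>j. of_int (B j l) * NN 0 l) = hh j"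
proof -
  have "(\<Sum>l\<le>j. of_int (B j l) * NN 0 l) = (\<Sum>l\<le>j. of_int (B j l) * (if l = 0 then 1 else 0) + (cc - b) * (of_int (B j l) * ww l))"
    by (rule sum.cong) (auto simp: NN_def algebra_simps)
  also have "\<dots> = sq j + (cc - b) * (RR cc j + X * cc^j)"
    by (simp add: sum.distrib sum_distrib_left[symmetric] sum_w sq_def sum_delta0)
  finally show ?thesis by (simp add: hh_def nu_RR algebra_simps)
qed

lemma NN_sym: "NN k l = NN l k"
  by (simp add: NN_def min.commute max.commute)

lemma commute_lt:
  assumes kl: "k < l"
  shows "NN k (Suc l) + (if l = 0 then 0 else NN k (l-1)) = NN (Suc k) l + (if k = 0 then 0 else NN (k-1) l)"
proof -
  have l1: "l \<ge> 1" using kl by simp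
  have "NN k (Suc l) + (if l = 0 then 0 else NN k (l-1)) = NN k (Suc l) + NN k (l-1)" using l1 by simp
  also have "\<dots> = (if k = l-1 then 1 else 0) + (cc-b)*pp k*(ww (Suc l) + ww (l-1))"
  proof -
    have "k \<le> l - 1" using kl by simp
    then show ?thesis using kl by (simp add: NN_def distrib_left min_def max_def)
  qed
  also have "ww (Suc l) + ww (l-1) = cc * ww l" using ww_rec[OF l1] by simp
  also have "(if k = l-1 then 1 else 0) + (cc-b)*pp k*(cc * ww l)
     = (if Suc k = l then 1 else 0) + (cc-b)*ww l*(cc * pp k)" using kl by (auto simp: algebra_simps)
  also have "cc * pp k = pp (Suc k) + (if k = 0 then 0 else pp (k-1))" using pp_rec[of k] by simp
  also have "(if Suc k = l then 1 else 0) + (cc-b)*ww l*(pp (Suc k) + (if k = 0 then 0 else pp (k-1)))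
      = NN (Suc k) l + (if k = 0 then 0 else NN (k-1) l)"
    using kl by (auto simp: NN_def distrib_left min_def max_def algebra_simps)
  finally show ?thesis .
qed

lemma commute: "NN k (Suc l) + (if l = 0 then 0 else NN k (l-1)) = NN (Suc k) l + (if k = 0 then 0 else NN (k-1) l)"
proof -
  consider "k < l" | "k = l" | "l < k" by linarith
  then show ?thesis
  proof cases
    case 1 then show ?thesis by (rule commute_lt)
  next
    case 2 then show ?thesis using NN_sym by auto
  next
    case 3 then show ?thesis using commute_lt[OF 3] NN_sym by (metis add.commute)
  qed
qed

lemma hankel: "hh (i+j) = (\<Sum>k\<le>i. of_int (B i k) * (\<Sum>l\<le>j. of_int (B j l) * NN k l))"
proof (induction i arbitrary: j)
  case 0 then show ?case by (simp add: base)
next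
  case (Suc i)
  have "hh (Suc i + j) = hh (i + Suc j)" by simp
  also have "\<dots> = (\<Sum>k\<le>i. of_int (B i k) * (\<Sum>l\<le>Suc j. of_int (B (Suc j) l) * NN k l))"
    by (rule Suc.IH)
  also have "\<dots> = (\<Sum>k\<le>i. of_int (B i k) * (\<Sum>l\<le>j. of_int (B j l) * (NN (Suc k) l + (if k = 0 then 0 else NN (k-1) l))))"
    unfolding shift_sum commute ..
  also have "\<dots> = (\<Sum>k\<le>i. \<Sum>l\<le>j. of_int (B j l) * (of_int (B i k) * (NN (Suc k) l + (if k = 0 then 0 else NN (k-1) l))))"
    by (simp add: sum_distrib_left algebra_simps)
  also have "\<dots> = (\<Sum>l\<le>j. of_int (B j l) * (\<Sum>k\<le>i. of_int (B i k) * (NN (Suc k) l + (if k = 0 then 0 else NN (k-1) l))))"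
    by (subst sum.swap) (simp add: sum_distrib_left)
  also have "\<dots> = (\<Sum>l\<le>j. of_int (B j l) * (\<Sum>k\<le>Suc i. of_int (B (Suc i) k) * NN k l))"
    unfolding shift_sum ..
  also have "\<dots> = (\<Sum>l\<le>j. \<Sum>k\<le>Suc i. of_int (B (Suc i) k) * (of_int (B j l) * NN k l))"
    by (rule sum.cong[OF refl]) (simp add: sum_distrib_left mult.left_commute del: sum.atMost_Suc)
  also have "\<dots> = (\<Sum>k\<le>Suc i. \<Sum>l\<le>j. of_int (B (Suc i) k) * (of_int (B j l) * NN k l))"
    by (rule sum.swap)
  also have "\<dots> = (\<Sum>k\<le>Suc i. of_int (B (Suc i) k) * (\<Sum>l\<le>j. of_int (B j l) * NN k l))"
    by (simp add: sum_distrib_left)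
  finally show ?case .
qed

end




lemma mat_mult_entry:
  fixes f g :: "nat \<times> nat \<Rightarrow> 'a::comm_ring_1"
  assumes "i < n" "j < n"
  shows "(mat n n f * mat n n g) $$ (i,j) = (\<Sum>k<n. f (i,k) * g (k,j))"
  using assms by (simp add: scalar_prod_def atLeast0LessThan)

definition band :: "'a::comm_ring_1 \<Rightarrow> nat \<Rightarrow> nat \<Rightarrow> 'a" where
  "band \<alpha> k j = (if j = k then 1 else if Suc j = k then \<alpha> else if Suc (Suc j) = k then 1 else 0)"

lemma band_sum:
  "(\<Sum>j<n. band \<alpha> k j * f j) = (if k < n then f k else 0) + (if 1 \<le> k \<and> k - 1 < n then \<alpha> * f (k-1) else 0)
     + (if 2 \<le> k \<and> k - 2 < n then f (k-2) else 0)"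
proof (induction n)
  case 0 then show ?case by simp
next
  case (Suc n)
  show ?case using Suc.IH by (cases "k = n"; cases "k = Suc n"; cases n) (auto simp: band_def)
qed


lemma row_op1:
  fixes X a b :: "'a::field_char_0"
  shows "NN X a b (Suc 0) l - cc a * NN X a b 0 l = band (-b) 1 l"
proof -
  have p1: "pp a (Suc 0) = cc a" using pp_rec[of a 0] by simp
  have w1: "ww X a (Suc 0) = 1 + X * cc a" using ww_1[of X a] by simp
  consider "l = 0" | "l = 1" | "l \<ge> 2" by linarith
  then show ?thesis
  proof cases
    case 1 then show ?thesis by (simp add: NN_def band_def p1 w1 ww_0 algebra_simps)
  next
    case 2 then show ?thesis by (simp add: NN_def band_def p1 w1 algebra_simps)
  next
    case 3
    have "NN X a b (Suc 0) l - cc a * NN X a b 0 l = (cc a - b) * ww X a l * (pp a (Suc 0) - cc a)"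
      using 3 by (simp add: NN_def algebra_simps)
    then show ?thesis using 3 by (simp add: p1 band_def)
  qed
qed

lemma row_op2:
  fixes X a b :: "'a::field_char_0"
  shows "NN X a b (Suc (Suc q)) l - cc a * NN X a b (Suc q) l + NN X a b q l = band (-b) (Suc (Suc q)) l"
proof -
  have p: "pp a (Suc (Suc q)) - cc a * pp a (Suc q) + pp a q = 0" using pp_rec[of a "Suc q"] by simp
  have w: "ww X a (Suc (Suc q)) - cc a * ww X a (Suc q) + ww X a q = 0" using ww_rec[of "Suc q" X a] by simp
  have wr: "ww X a (Suc q) * pp a q - pp a (Suc q) * ww X a q = 1" by (rule wronski)
  consider "l \<le> q" | "l = Suc q" | "l = Suc (Suc q)" | "l > Suc (Suc q)" by linarith
  then show ?thesis
  proof cases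
    case 1
    have "NN X a b (Suc (Suc q)) l - cc a * NN X a b (Suc q) l + NN X a b q l
        = (if l = q then 1 else 0) + (cc a - b) * pp a l * (ww X a (Suc (Suc q)) - cc a * ww X a (Suc q) + ww X a q)"
      using 1 by (simp add: NN_def algebra_simps min_def max_def)
    then show ?thesis using 1 w by (simp add: band_def)
  next
    case 2
    have eq: "ww X a (Suc (Suc q)) = cc a * ww X a (Suc q) - ww X a q" using w by (simp add: algebra_simps)
    have "NN X a b (Suc (Suc q)) l - cc a * NN X a b (Suc q) l + NN X a b q l
        = (cc a - b) * pp a (Suc q) * ww X a (Suc (Suc q)) - cc a * (1 + (cc a - b) * pp a (Suc q) * ww X a (Suc q)) + (cc a - b) * pp a q * ww X a (Suc q)"
      using 2 by (simp add: NN_def min_def max_def)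
    also have "\<dots> = (cc a - b) * (ww X a (Suc q) * pp a q - pp a (Suc q) * ww X a q) - cc a"
      unfolding eq by (simp add: algebra_simps)
    finally have "NN X a b (Suc (Suc q)) l - cc a * NN X a b (Suc q) l + NN X a b q l
        = (cc a - b) * (ww X a (Suc q) * pp a q - pp a (Suc q) * ww X a q) - cc a" .
    then show ?thesis using 2 wr by (simp add: band_def)
  next
    case 3
    have "NN X a b (Suc (Suc q)) l - cc a * NN X a b (Suc q) l + NN X a b q l
        = 1 + (cc a - b) * ww X a l * (pp a (Suc (Suc q)) - cc a * pp a (Suc q) + pp a q)"
      using 3 by (simp add: NN_def algebra_simps min_def max_def)
    then show ?thesis using 3 p by (simp add: band_def)
  next
    case 4
    have "NN X a b (Suc (Suc q)) l - cc a * NN X a b (Suc q) l + NN X a b q l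
        = (cc a - b) * ww X a l * (pp a (Suc (Suc q)) - cc a * pp a (Suc q) + pp a q)"
      using 4 by (simp add: NN_def algebra_simps min_def max_def)
    then show ?thesis using 4 p by (simp add: band_def)
  qed
qed

lemma row_op:
  fixes X a b :: "'a::field_char_0"
  assumes "k < n"
  shows "(\<Sum>j<n. band (- cc a) k j * NN X a b j l) = (if k = 0 then NN X a b 0 l else band (-b) k l)"
proof -
  consider "k = 0" | "k = 1" | q where "k = Suc (Suc q)" by (metis One_nat_def not0_implies_Suc)
  then show ?thesis
  proof cases
    case 1 then show ?thesis using assms by (simp add: band_sum)
  next
    case 2 then show ?thesis using assms row_op1[of X a b l] by (simp add: band_sum)
  next
    case 3 then show ?thesis using assms row_op2[of X a b q l] by (simp add: band_sum)
  qed
qed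

lemma uu_rec: "n \<ge> 0 \<Longrightarrow> chebU (n+1) (b/2) = b * chebU n (b/2) - chebU (n-1) (b/2)"
  using chebU_rec[of n "b/2"] by simp

lemma col_op:
  fixes b :: "'a::field_char_0"
  assumes "1 \<le> k" "k < n" "l < n"
  shows "(\<Sum>j<n. band (- b) k j * chebU (int j - int l) (b/2)) = (if k = l then 1 else 0)"
proof -
  define F where "F j = chebU (int j - int l) (b/2)" for j
  have u1: "chebU 1 (b/2) = b" using uu_rec[of 0 b] by (simp add: chebU_neg)
  have S: "(\<Sum>j<n. band (- b) k j * F j) = (if k < n then F k else 0) + (if 1 \<le> k \<and> k - 1 < n then (-b) * F (k-1) else 0)
     + (if 2 \<le> k \<and> k - 2 < n then F (k-2) else 0)" by (rule band_sum)
  consider "k = 1" | q where "k = Suc (Suc q)" using assms(1) by (metis One_nat_def Suc_le_D not0_implies_Suc)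
  then have "(\<Sum>j<n. band (- b) k j * F j) = (if k = l then 1 else 0)"
  proof cases
    case 1
    then have "(\<Sum>j<n. band (- b) k j * F j) = F 1 - b * F 0" using S assms by simp
    then show ?thesis using 1 u1 by (cases l) (auto simp: F_def chebU_neg)
  next
    case 2
    then have "(\<Sum>j<n. band (- b) k j * F j) = F (Suc (Suc q)) - b * F (Suc q) + F q" using S assms by simp
    also have "\<dots> = (if k = l then 1 else 0)"
    proof -
      consider "int q + 2 < int l" | "int q + 2 = int l" | "int q + 1 = int l" | "int q + 2 \<ge> int l + 2" by linarith
      then show ?thesis
      proof cases
        case 1 then show ?thesis using 2 by (simp add: F_def chebU_neg)
      next
        case 2 then have "l = Suc (Suc q)" by simp
        then show ?thesis using \<open>k = _\<close> by (simp add: F_def chebU_neg)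
      next
        case 3 then have "l = Suc q" by simp
        then show ?thesis using \<open>k = _\<close> u1 by (simp add: F_def chebU_neg)
      next
        case 4
        have "chebU ((int q - int l) + 1) (b/2) = b * chebU (int q - int l) (b/2) - chebU (int q - int l - 1) (b/2)"
          using 4 uu_rec[of "int q - int l" b] by simp
        moreover have "chebU ((int q - int l) + 2) (b/2) = b * chebU (int q - int l + 1) (b/2) - chebU (int q - int l) (b/2)"
          using 4 uu_rec[of "int q - int l + 1" b] by (simp add: add.assoc)
        ultimately show ?thesis using 4 \<open>k = _\<close> by (simp add: F_def algebra_simps)
      qed
    qed
    finally show ?thesis .
  qed
  then show ?thesis by (simp add: F_def)
qed




lemma CD:
  fixes X a b :: "'a::field_char_0"
  shows "(\<Sum>j<Suc m. NN X a b 0 j * chebU (int j) (b/2))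
     = chebU (int m) (b/2) * ww X a (Suc m) - chebU (int m + 1) (b/2) * ww X a m"
proof (induction m)
  case 0
  have u1: "chebU 1 (b/2) = b" using uu_rec[of 0 b] by (simp add: chebU_neg)
  show ?case using u1 ww_1[of X a] by (simp add: NN_def ww_0 algebra_simps)
next
  case (Suc m)
  have u: "chebU (int m + 2) (b/2) = b * chebU (int m + 1) (b/2) - chebU (int m) (b/2)"
    using uu_rec[of "int m + 1" b] by (simp add: add.assoc)
  have w: "ww X a (Suc (Suc m)) = cc a * ww X a (Suc m) - ww X a m" using ww_rec[of "Suc m" X a] by simp
  have n0: "NN X a b 0 (Suc m) = (cc a - b) * ww X a (Suc m)" by (simp add: NN_def)
  have "(\<Sum>j<Suc (Suc m). NN X a b 0 j * chebU (int j) (b/2))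
     = chebU (int m) (b/2) * ww X a (Suc m) - chebU (int m + 1) (b/2) * ww X a m
       + (cc a - b) * ww X a (Suc m) * chebU (int m + 1) (b/2)"
    using Suc.IH by (simp add: n0 add.commute)
  also have "\<dots> = chebU (int m + 1) (b/2) * ww X a (Suc (Suc m)) - chebU (int m + 2) (b/2) * ww X a (Suc m)"
    unfolding u w by (simp add: algebra_simps)
  finally show ?case by (simp add: add.commute add.left_commute)
qed

lemma prod_diag: "A \<in> carrier_mat n n \<Longrightarrow> prod_list (diag_mat A) = (\<Prod>i<n. A $$ (i,i))"
  unfolding diag_mat_def by (simp add: prod.distinct_set_conv_list[symmetric] atLeast0LessThan)

lemma restrictB:
  fixes f :: "nat \<Rightarrow> 'a::comm_ring_1"
  assumes "i < n"
  shows "(\<Sum>k<n. of_int (B i k) * f k) = (\<Sum>k\<le>i. of_int (B i k) * f k)"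
  by (rule sum.mono_neutral_right) (use assms in \<open>auto simp: B_above\<close>)

lemma entry_hh:
  fixes X a b :: "'a::field_char_0"
  shows "hh X a b m = X * (-2*a)^(m+1) + (\<Sum>k=0..m div 2. (-2*a)^(m-2*k) * catalan k)
     - b * (X * (-2*a)^m + (\<Sum>k\<in>{0..(int m - 1) div 2}. (-2*a)^(nat (int m - 2*k - 1)) * catalan (nat k)))"
  by (simp add: hh_def cc_def nu_def second_sum)




theorem theorem15:
  fixes X a b :: "'a :: field_char_0" and n :: nat
  assumes "n \<ge> 1"
  shows "det (mat n n (\<lambda>(i,j).
            X * (-2*a)^(i+j+1) + (\<Sum>k=0..(i+j) div 2. (-2*a)^(i+j-2*k) * catalan k)
          - b * (X * (-2*a)^(i+j)
                 + (\<Sum>k\<in>{0..(int (i+j) - 1) div 2}. (-2*a)^(nat (int (i+j) - 2*k - 1)) * catalan (nat k)))))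
       = chebU (int n - 1) (b/2) * (X * chebU (int n) (-a) + chebU (int n - 1) (-a))
         - chebU (int n) (b/2) * (X * chebU (int n - 1) (-a) + chebU (int n - 2) (-a))"
  (is "det ?H = ?R")
proof -
  define Bm :: "'a mat" where "Bm = mat n n (\<lambda>(i,k). of_int (B i k))"
  define Nm where "Nm = mat n n (\<lambda>(k,l). NN X a b k l)"
  define Em :: "'a mat" where "Em = mat n n (\<lambda>(k,j). band (- cc a) k j)"
  define Mm where "Mm = mat n n (\<lambda>(k,l). if k = 0 then NN X a b 0 l else band (-b) k l)"
  define Um where "Um = mat n n (\<lambda>(j,l). chebU (int j - int l) (b/2))"
  have cB: "Bm \<in> carrier_mat n n" and cN: "Nm \<in> carrier_mat n n" and cE: "Em \<in> carrier_mat n n"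
    and cM: "Mm \<in> carrier_mat n n" and cU: "Um \<in> carrier_mat n n"
    unfolding Bm_def Nm_def Em_def Mm_def Um_def by auto
  have H_eq: "?H = Bm * Nm * transpose_mat Bm"
  proof (rule eq_matI)
    fix i j assume ij: "i < dim_row (Bm * Nm * transpose_mat Bm)" "j < dim_col (Bm * Nm * transpose_mat Bm)"
    then have i: "i < n" and j: "j < n" using cB by auto
    have "(Bm * Nm * transpose_mat Bm) $$ (i,j) = (\<Sum>l<n. (\<Sum>k<n. of_int (B i k) * NN X a b k l) * of_int (B j l))"
      using i j cB cN by (simp add: Bm_def Nm_def scalar_prod_def atLeast0LessThan)
    also have "\<dots> = (\<Sum>k<n. of_int (B i k) * (\<Sum>l<n. of_int (B j l) * NN X a b k l))"
    proof -
      have "(\<Sum>l<n. (\<Sum>k<n. of_int (B i k) * NN X a b k l) * of_int (B j l))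
          = (\<Sum>l<n. \<Sum>k<n. of_int (B i k) * (of_int (B j l) * NN X a b k l))"
        by (intro sum.cong refl) (simp add: sum_distrib_left sum_distrib_right ac_simps)
      also have "\<dots> = (\<Sum>k<n. \<Sum>l<n. of_int (B i k) * (of_int (B j l) * NN X a b k l))"
        by (rule sum.swap)
      also have "\<dots> = (\<Sum>k<n. of_int (B i k) * (\<Sum>l<n. of_int (B j l) * NN X a b k l))"
        by (simp add: sum_distrib_left)
      finally show ?thesis .
    qed
    also have "\<dots> = (\<Sum>k\<le>i. of_int (B i k) * (\<Sum>l\<le>j. of_int (B j l) * NN X a b k l))"
      using i j by (simp add: restrictB)
    also have "\<dots> = hh X a b (i+j)" by (rule hankel[symmetric])
    finally show "?H $$ (i,j) = (Bm * Nm * transpose_mat Bm) $$ (i,j)"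
      using i j by (simp add: entry_hh)
  qed (use cB cN in auto)
  have detB: "det Bm = 1"
  proof -
    have "det Bm = prod_list (diag_mat Bm)"
      by (rule det_lower_triangular[OF _ cB]) (simp add: Bm_def B_above)
    also have "\<dots> = (\<Prod>i<n. Bm $$ (i,i))" by (rule prod_diag[OF cB])
    also have "\<dots> = 1" by (simp add: Bm_def B_diag)
    finally show ?thesis .
  qed
  have detE: "det Em = 1"
  proof -
    have "det Em = prod_list (diag_mat Em)"
      by (rule det_lower_triangular[OF _ cE]) (auto simp: Em_def band_def)
    also have "\<dots> = (\<Prod>i<n. Em $$ (i,i))" by (rule prod_diag[OF cE])
    also have "\<dots> = 1" by (simp add: Em_def band_def)
    finally show ?thesis .
  qed
  have detU: "det Um = 1"
  proof -
    have "det Um = prod_list (diag_mat Um)"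
      by (rule det_lower_triangular[OF _ cU]) (auto simp: Um_def chebU_neg)
    also have "\<dots> = (\<Prod>i<n. Um $$ (i,i))" by (rule prod_diag[OF cU])
    also have "\<dots> = 1" by (simp add: Um_def)
    finally show ?thesis .
  qed
  have EN: "Em * Nm = Mm"
  proof (rule eq_matI)
    fix k l assume "k < dim_row Mm" "l < dim_col Mm"
    then have k: "k < n" and l: "l < n" using cM by auto
    have "(Em * Nm) $$ (k,l) = (\<Sum>j<n. band (- cc a) k j * NN X a b j l)"
      unfolding Em_def Nm_def by (subst mat_mult_entry[OF k l]) simp
    then show "(Em * Nm) $$ (k,l) = Mm $$ (k,l)"
      using k l row_op[OF k, where X=X and a=a and b=b and l=l] by (simp add: Mm_def)
  qed (use cM cE cN in auto)
  define T where "T = Mm * Um"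
  have cT: "T \<in> carrier_mat n n" unfolding T_def using cM cU by auto
  have Tlow: "T $$ (k,l) = (if k = l then 1 else 0)" if "1 \<le> k" "k < n" "l < n" for k l
  proof -
    have "T $$ (k,l) = (\<Sum>j<n. band (- b) k j * chebU (int j - int l) (b/2))"
      unfolding T_def Mm_def Um_def using that by (subst mat_mult_entry) auto
    then show ?thesis using col_op[OF that, where b=b and 'a='a] by simp
  qed
  have T00: "T $$ (0,0) = (\<Sum>j<n. NN X a b 0 j * chebU (int j) (b/2))"
    unfolding T_def Mm_def Um_def using assms by (subst mat_mult_entry) auto
  have detT: "det T = T $$ (0,0)"
  proof -
    have ut: "upper_triangular T" unfolding upper_triangular_def using cT Tlow by auto
    have "det T = prod_list (diag_mat T)" by (rule det_upper_triangular[OF ut cT])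
    also have "\<dots> = (\<Prod>i<n. T $$ (i,i))" using cT by (simp add: prod_diag)
    also have "\<dots> = T $$ (0,0)"
    proof -
      obtain m where m: "n = Suc m" using assms by (cases n) auto
      show ?thesis unfolding m prod.lessThan_Suc_shift using Tlow m by simp
    qed
    finally show ?thesis .
  qed
  have "det ?H = det Bm * det Nm * det Bm"
    unfolding H_eq using cB cN by (simp add: det_mult[of _ n] det_transpose)
  also have "\<dots> = det Nm" using detB by simp
  also have "\<dots> = det Mm" using det_mult[OF cE cN] EN detE by simp
  also have "\<dots> = det T" using det_mult[OF cM cU] detU unfolding T_def by simp
  also have "\<dots> = (\<Sum>j<n. NN X a b 0 j * chebU (int j) (b/2))" using detT T00 by simp
  also have "\<dots> = ?R"
  proof -
    obtain m where m: "n = Suc m" using assms by (cases n) auto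
    have e: "int n - 1 = int m" "int n = int m + 1" "int n - 2 = int m - 1" using m by auto
    show ?thesis unfolding m CD using e by (simp add: ww_def m algebra_simps)
  qed
  finally show ?thesis .
qed


end
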